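(* Let $p(z)=z^n+a_1z^{n-1}+\dots+a_n$ and $q(z)$ be relatively prime polynomials of degrees $n$ and $k$ respectively, with $k<n$. Let $F$ be a bounded closed set in the complex $w$-plane and let $F^*=\{z\in\mathbb C: q(z)\ne0,\ p(z)/q(z)\in F\}$ be its preimage under $w=\varphi(z)=p(z)/q(z)$, assumed compact and nonempty. Let $m=\min_{z\in F^*}|q(z)|$ and $M=\max_{z\in F^*}|q(z)|$. Then $$[m\,\tau(F)]^{1/n}\le\tau(F^* )\le[M\,\tau(F)]^{1/n}.$$
   Context: Transfinite diameter of a compact $F\subset\mathbb C$: for $n\ge2$, $d_n(F)=\max_{z_1,\dots,z_n\in F}\big(\prod_{1\le j<k\le n}|z_j-z_k|\big)^{2/(n(n-1))}$, and $\tau(F)=\lim_{n\to\infty}d_n(F)$ (the limit exists), with $\tau(F)=0$ if $F$ is finite or empty. It coincides with the logarithmic capacity and the Chebyshev constant $\lim_{n}(\min_{q_n}\max_{z\in F}|q_n(z)|)^{1/n}$, the minimum over monic polynomials of degree $n$. *)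

theory Defs
  imports "HOL-Analysis.Analysis" "HOL-Computational_Algebra.Polynomial"
begin

definition nth_diameter :: "nat \<Rightarrow> complex set \<Rightarrow> real" where
  "nth_diameter n F =
     Sup {(\<Prod>j<n. \<Prod>k\<in>{j<..<n}. cmod (z j - z k)) powr (2 / (real n * (real n - 1))) | z.
            \<forall>i<n. z i \<in> F}"

definition transfinite_diameter :: "complex set \<Rightarrow> real" where
  "transfinite_diameter F = (if finite F then 0 else lim (\<lambda>n. nth_diameter n F))"

end

theory Submission
  imports Defs "HOL-Real_Asymp.Real_Asymp" "HOL-Computational_Algebra.Fundamental_Theorem_Algebra"
begin


definition VV :: "nat \<Rightarrow> (nat \<Rightarrow> complex) \<Rightarrow> real" where
  "VV N z = (\<Prod>j<N. \<Prod>k\<in>{j<..<N}. cmod (z j - z k))"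

definition QS :: "nat set \<Rightarrow> (nat \<Rightarrow> complex) \<Rightarrow> real" where
  "QS I x = (\<Prod>a\<in>I. \<Prod>b\<in>I-{a}. cmod (x a - x b))"

lemma VV_nonneg: "VV N z \<ge> 0"
  unfolding VV_def by (intro prod_nonneg) auto

lemma QS_nonneg: "QS I z \<ge> 0"
  unfolding QS_def by (intro prod_nonneg) auto

lemma QS_remove:
  assumes "finite I" "i \<in> I"
  shows "QS I x = (\<Prod>b\<in>I-{i}. cmod (x i - x b))^2 * QS (I-{i}) x"
proof -
  have "QS I x = (\<Prod>b\<in>I-{i}. cmod (x i - x b)) * (\<Prod>a\<in>I-{i}. \<Prod>b\<in>I-{a}. cmod (x a - x b))"
    unfolding QS_def using assms by (simp add: prod.remove)
  also have "(\<Prod>a\<in>I-{i}. \<Prod>b\<in>I-{a}. cmod (x a - x b))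
      = (\<Prod>a\<in>I-{i}. cmod (x i - x a) * (\<Prod>b\<in>(I-{i})-{a}. cmod (x a - x b)))"
  proof (rule prod.cong[OF refl])
    fix a assume a: "a \<in> I - {i}"
    have "I - {a} = insert i ((I-{i})-{a})" using a assms by auto
    hence "(\<Prod>b\<in>I-{a}. cmod (x a - x b)) = cmod (x a - x i) * (\<Prod>b\<in>(I-{i})-{a}. cmod (x a - x b))"
      using assms by (simp add: prod.insert)
    thus "(\<Prod>b\<in>I-{a}. cmod (x a - x b)) = cmod (x i - x a) * (\<Prod>b\<in>(I-{i})-{a}. cmod (x a - x b))"
      by (simp add: norm_minus_commute)
  qed
  also have "\<dots> = (\<Prod>a\<in>I-{i}. cmod (x i - x a)) * QS (I-{i}) x"
    unfolding QS_def by (simp add: prod.distrib)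
  finally show ?thesis by (simp add: power2_eq_square mult_ac)
qed

lemma VV_Suc: "VV (Suc N) x = (\<Prod>j<N. cmod (x j - x N)) * VV N x"
proof -
  have e: "{N<..<Suc N} = {}" by auto
  have "VV (Suc N) x = (\<Prod>j<N. \<Prod>k\<in>{j<..<Suc N}. cmod (x j - x k))"
    unfolding VV_def by (subst prod.lessThan_Suc) (simp only: e prod.empty mult_1_right)
  also have "\<dots> = (\<Prod>j<N. cmod (x j - x N) * (\<Prod>k\<in>{j<..<N}. cmod (x j - x k)))"
  proof (rule prod.cong[OF refl])
    fix j assume "j \<in> {..<N}"
    hence "{j<..<Suc N} = insert N {j<..<N}" by auto
    thus "(\<Prod>k\<in>{j<..<Suc N}. cmod (x j - x k)) = cmod (x j - x N) * (\<Prod>k\<in>{j<..<N}. cmod (x j - x k))"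
      by simp
  qed
  finally show ?thesis unfolding VV_def by (simp add: prod.distrib)
qed

lemma QS_VV: "QS {..<N} x = (VV N x)^2"
proof (induction N)
  case 0 thus ?case by (simp add: QS_def VV_def)
next
  case (Suc N)
  have "QS {..<Suc N} x = (\<Prod>b\<in>{..<Suc N}-{N}. cmod (x N - x b))^2 * QS ({..<Suc N}-{N}) x"
    by (rule QS_remove) auto
  also have "{..<Suc N}-{N} = {..<N}" by auto
  also have "(\<Prod>b\<in>{..<N}. cmod (x N - x b)) = (\<Prod>j<N. cmod (x j - x N))"
    by (simp add: norm_minus_commute)
  finally show ?case using Suc by (simp add: VV_Suc power_mult_distrib)
qed

lemma QS_reindex:
  assumes "bij_betw h A B"
  shows "QS B x = QS A (x \<circ> h)"
proof -
  have "QS B x = (\<Prod>a\<in>A. \<Prod>b\<in>B-{h a}. cmod (x (h a) - x b))"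
    unfolding QS_def using prod.reindex_bij_betw[OF assms, symmetric] by simp
  also have "\<dots> = (\<Prod>a\<in>A. \<Prod>b\<in>A-{a}. cmod (x (h a) - x (h b)))"
  proof (rule prod.cong[OF refl])
    fix a assume a: "a \<in> A"
    have ha: "h a \<in> B" using assms a bij_betwE by blast
    have "bij_betw h (A-{a}) (B-{h a})"
      using bij_betw_DiffI[OF assms, of "{a}" "{h a}"] a ha by simp
    from prod.reindex_bij_betw[OF this, of "\<lambda>b. cmod (x (h a) - x b)"]
    show "(\<Prod>b\<in>B-{h a}. cmod (x (h a) - x b)) = (\<Prod>b\<in>A-{a}. cmod (x (h a) - x (h b)))"
      by simp
  qed
  finally show ?thesis unfolding QS_def by simp
qed

lemma QS_bound:
  assumes W: "\<And>y. (\<forall>j<N. y j \<in> K) \<Longrightarrow> VV N y \<le> W"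
    and J: "finite J" "card J = N" "x ` J \<subseteq> K"
  shows "QS J x \<le> W^2"
proof -
  obtain h where h: "bij_betw h {..<N} J"
    using finite_same_card_bij[of "{..<N}" J] J by auto
  have "QS J x = QS {..<N} (x \<circ> h)" by (rule QS_reindex[OF h])
  also have "\<dots> = (VV N (x \<circ> h))^2" by (rule QS_VV)
  also have "\<dots> \<le> W^2"
  proof (rule power_mono[OF W VV_nonneg])
    show "\<forall>j<N. (x \<circ> h) j \<in> K" using h J(3) by (auto simp: bij_betw_def)
  qed
  finally show ?thesis .
qed

lemma QS_zero:
  assumes "finite I" "a \<in> I" "b \<in> I" "a \<noteq> b" "x a = x b"
  shows "QS I x = 0"
  unfolding QS_def using assms by (subst prod_zero_iff) (auto simp: prod_zero_iff)

lemma QS_pos: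
  assumes "finite I" "inj_on x I"
  shows "QS I x > 0"
  unfolding QS_def using assms by (intro prod_pos) (auto simp: inj_on_def)



lemma nd_eq: "nth_diameter N K = Sup {VV N z powr (2 / (real N * (real N - 1))) | z. \<forall>i<N. z i \<in> K}"
  unfolding nth_diameter_def VV_def by simp

lemma VV_bound:
  assumes "bounded K"
  obtains C where "C \<ge> 1" "\<And>z. (\<forall>i<N. z i \<in> K) \<Longrightarrow> VV N z \<le> C^(N*N)"
proof -
  obtain B where B: "\<forall>x\<in>K. norm x \<le> B" using assms bounded_iff by auto
  define C where "C = max 1 (2*B)"
  have "C \<ge> 1" unfolding C_def by simp
  moreover have "VV N z \<le> C^(N*N)" if z: "\<forall>i<N. z i \<in> K" for z
  proof -
    have "VV N z \<le> (\<Prod>j<N. \<Prod>k\<in>{j<..<N}. C)"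
      unfolding VV_def
    proof (intro prod_mono conjI)
      fix j k assume "j \<in> {..<N}" "k \<in> {j<..<N}"
      hence "z j \<in> K" "z k \<in> K" using z by auto
      hence "cmod (z j - z k) \<le> cmod (z j) + cmod (z k)" "cmod (z j) \<le> B" "cmod (z k) \<le> B"
        using B norm_triangle_ineq4 by auto
      thus "cmod (z j - z k) \<le> C" unfolding C_def by linarith
    qed (auto intro: prod_nonneg)
    also have "\<dots> \<le> (\<Prod>j<N. C^N)"
      using \<open>C \<ge> 1\<close> by (intro prod_mono) (auto intro!: power_increasing)
    also have "\<dots> = C^(N*N)" by (simp add: power_mult)
    finally show ?thesis .
  qed
  ultimately show ?thesis using that by blast
qed

lemma nd_facts:
  assumes "bounded K" "K \<noteq> {}" "N \<ge> 2"
  shows "bdd_above {VV N z powr (2 / (real N * (real N - 1))) | z. \<forall>i<N. z i \<in> K}"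
    and "{VV N z powr (2 / (real N * (real N - 1))) | z. \<forall>i<N. z i \<in> K} \<noteq> {}"
proof -
  obtain C where C: "C \<ge> 1" "\<And>z. (\<forall>i<N. z i \<in> K) \<Longrightarrow> VV N z \<le> C^(N*N)"
    using VV_bound[OF assms(1)] by blast
  show "bdd_above {VV N z powr (2 / (real N * (real N - 1))) | z. \<forall>i<N. z i \<in> K}"
    unfolding bdd_above_def
  proof (intro exI ballI)
    fix y assume "y \<in> {VV N z powr (2 / (real N * (real N - 1))) | z. \<forall>i<N. z i \<in> K}"
    then obtain z where "\<forall>i<N. z i \<in> K" "y = VV N z powr (2 / (real N * (real N - 1)))" by auto
    thus "y \<le> (C^(N*N)) powr (2 / (real N * (real N - 1)))"
      using C assms(3) by (auto intro!: powr_mono2 VV_nonneg)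
  qed
  obtain c where "c \<in> K" using assms by auto
  thus "{VV N z powr (2 / (real N * (real N - 1))) | z. \<forall>i<N. z i \<in> K} \<noteq> {}"
    by (auto intro!: exI[of _ "\<lambda>_. c"])
qed

lemma nd_upper:
  assumes "bounded K" "N \<ge> 2" "\<forall>i<N. z i \<in> K"
  shows "VV N z \<le> nth_diameter N K powr (real N * (real N - 1) / 2)"
proof -
  have "z 0 \<in> K" using assms by auto
  hence K: "K \<noteq> {}" by auto
  have e: "2 / (real N * (real N - 1)) > 0" using assms(2) by auto
  have "VV N z powr (2 / (real N * (real N - 1))) \<le> nth_diameter N K"
    unfolding nd_eq using nd_facts[OF assms(1) K assms(2)] assms(3) by (intro cSup_upper) auto
  hence "(VV N z powr (2 / (real N * (real N - 1)))) powr (real N * (real N - 1) / 2)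
      \<le> nth_diameter N K powr (real N * (real N - 1) / 2)"
    using assms(2) by (intro powr_mono2) auto
  also have "(VV N z powr (2 / (real N * (real N - 1)))) powr (real N * (real N - 1) / 2) = VV N z"
    using VV_nonneg[of N z] e assms(2) by (simp add: powr_powr)
  finally show ?thesis .
qed

lemma nd_nonneg:
  assumes "bounded K" "K \<noteq> {}" "N \<ge> 2"
  shows "nth_diameter N K \<ge> 0"
proof -
  obtain c where "c \<in> K" using assms by auto
  have "0 \<le> VV N (\<lambda>_. c) powr (2 / (real N * (real N - 1)))" by simp
  also have "\<dots> \<le> nth_diameter N K"
    unfolding nd_eq using nd_facts[OF assms] \<open>c \<in> K\<close> by (intro cSup_upper) auto
  finally show ?thesis .
qed

lemma nd_approx:
  assumes "bounded K" "K \<noteq> {}" "N \<ge> 2" "c < nth_diameter N K"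
  shows "\<exists>z. (\<forall>i<N. z i \<in> K) \<and> c < VV N z powr (2 / (real N * (real N - 1)))"
proof -
  from assms(4) have "c < Sup {VV N z powr (2 / (real N * (real N - 1))) | z. \<forall>i<N. z i \<in> K}"
    by (simp add: nd_eq)
  from less_cSupE[OF this nd_facts(2)[OF assms(1-3)]] show ?thesis by blast
qed

lemma exists_inj_tuple:
  fixes N :: nat
  assumes "infinite K"
  obtains z where "\<forall>i<N. z i \<in> K" "inj_on z {..<N}"
proof -
  obtain B where B: "finite B" "card B = N" "B \<subseteq> K" using infinite_arbitrarily_large[OF assms] by blast
  obtain h where h: "bij_betw h {..<N} B" using finite_same_card_bij[of "{..<N}" B] B by auto
  show ?thesis using that[of h] h B by (auto simp: bij_betw_def)
qed

lemma VV_pos_inj: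
  assumes "inj_on z {..<N}"
  shows "VV N z > 0"
proof -
  have "QS {..<N} z > 0" by (rule QS_pos) (use assms in auto)
  hence "(VV N z)^2 > 0" by (simp add: QS_VV)
  thus ?thesis using VV_nonneg[of N z] by (simp add: zero_less_power2)
qed

lemma nd_pos:
  assumes "bounded K" "infinite K" "N \<ge> 2"
  shows "nth_diameter N K > 0"
proof -
  obtain z where z: "\<forall>i<N. z i \<in> K" "inj_on z {..<N}" using exists_inj_tuple[OF assms(2)] by blast
  have K: "K \<noteq> {}" using assms(2) by auto
  have "0 < VV N z powr (2 / (real N * (real N - 1)))" using VV_pos_inj[OF z(2)] by simp
  also have "\<dots> \<le> nth_diameter N K"
    unfolding nd_eq using nd_facts[OF assms(1) K assms(3)] z by (intro cSup_upper) auto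
  finally show ?thesis .
qed



lemma linprod_facts:
  fixes a :: "nat \<Rightarrow> complex"
  assumes "finite J"
  shows "degree (\<Prod>j\<in>J. [:-a j, 1:]) = card J" "lead_coeff (\<Prod>j\<in>J. [:-a j, 1:]) = 1"
    "poly (\<Prod>j\<in>J. [:-a j, 1:]) z = (\<Prod>j\<in>J. z - a j)"
proof -
  show "degree (\<Prod>j\<in>J. [:-a j, 1:]) = card J"
    by (subst degree_prod_eq_sum_degree) auto
  show "lead_coeff (\<Prod>j\<in>J. [:-a j, 1:]) = 1"
    by (subst lead_coeff_prod) auto
  show "poly (\<Prod>j\<in>J. [:-a j, 1:]) z = (\<Prod>j\<in>J. z - a j)"
    by (simp add: poly_prod)
qed

lemma lagrange_lead:
  fixes P :: "complex poly" and x :: "nat \<Rightarrow> complex"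
  assumes inj: "inj_on x {..N}" and P: "lead_coeff P = 1" "degree P = N"
  shows "(\<Sum>i\<le>N. poly P (x i) / (\<Prod>j\<in>{..N}-{i}. (x i - x j))) = 1"
proof -
  define l where "l i = (\<Prod>j\<in>{..N}-{i}. [:-x j, 1:])" for i
  define D where "D i = (\<Prod>j\<in>{..N}-{i}. (x i - x j))" for i
  have cardN: "card ({..N}-{i}) = N" if "i \<le> N" for i using that by simp
  have degl: "degree (l i) = N" if "i \<le> N" for i
    unfolding l_def by (subst linprod_facts(1)) (use cardN[OF that] in simp_all)
  have lcl: "coeff (l i) N = 1" if "i \<le> N" for i
    using linprod_facts(2)[of "{..N}-{i}" x] degl[OF that] unfolding l_def by simp
  have polyl: "poly (l i) z = (\<Prod>j\<in>{..N}-{i}. z - x j)" for i z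
    unfolding l_def by (subst linprod_facts(3)) simp_all
  have Dnz: "D i \<noteq> 0" if "i \<le> N" for i
    unfolding D_def using inj that by (auto simp: inj_on_def)
  define Q where "Q = (\<Sum>i\<le>N. smult (poly P (x i) / D i) (l i))"
  have polyQ: "poly Q (x k) = poly P (x k)" if k: "k \<le> N" for k
  proof -
    have "poly Q (x k) = (\<Sum>i\<le>N. poly P (x i) / D i * poly (l i) (x k))"
      unfolding Q_def poly_sum poly_smult by (rule refl)
    also have "\<dots> = poly P (x k) / D k * poly (l k) (x k) +
        (\<Sum>i\<in>{..N}-{k}. poly P (x i) / D i * poly (l i) (x k))"
      by (rule sum.remove) (use k in auto)
    also have "(\<Sum>i\<in>{..N}-{k}. poly P (x i) / D i * poly (l i) (x k)) = 0"
    proof (rule sum.neutral, rule ballI)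
      fix i assume i: "i \<in> {..N} - {k}"
      have "poly (l i) (x k) = 0" unfolding polyl using i k
        by (intro prod_zero) (auto intro!: bexI[of _ k])
      thus "poly P (x i) / D i * poly (l i) (x k) = 0" by simp
    qed
    also have "poly (l k) (x k) = D k" unfolding polyl D_def by simp
    finally show ?thesis using Dnz[OF k] by simp
  qed
  have degQ: "degree Q \<le> N"
    unfolding Q_def by (intro degree_sum_le) (auto intro: order.trans[OF degree_smult_le] simp: degl)
  have "P - Q = 0"
  proof (rule ccontr)
    assume nz: "P - Q \<noteq> 0"
    have "x ` {..N} \<subseteq> {z. poly (P - Q) z = 0}" using polyQ by auto
    hence "card (x ` {..N}) \<le> card {z. poly (P - Q) z = 0}"
      by (intro card_mono poly_roots_finite nz)
    also have "\<dots> \<le> degree (P - Q)" by (rule card_poly_roots_bound[OF nz])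
    also have "\<dots> \<le> N" by (rule degree_diff_le) (use degQ P in auto)
    finally show False using card_image[OF inj] by simp
  qed
  hence PQ: "P = Q" by simp
  have "1 = coeff P N" using P by simp
  also have "\<dots> = coeff Q N" using PQ by simp
  also have "\<dots> = (\<Sum>i\<le>N. poly P (x i) / D i * coeff (l i) N)"
    unfolding Q_def coeff_sum coeff_smult by (rule refl)
  also have "\<dots> = (\<Sum>i\<le>N. poly P (x i) / D i)"
    by (intro sum.cong refl) (use degl lcl in auto)
  finally show ?thesis unfolding D_def by simp
qed

lemma B_rec:
  fixes P :: "complex poly"
  assumes P: "lead_coeff P = 1" "degree P = N" and PA: "\<forall>z\<in>K. cmod (poly P z) \<le> A"
    and W: "\<And>y. (\<forall>j<N. y j \<in> K) \<Longrightarrow> VV N y \<le> W" and W0: "W \<ge> 0" and A0: "A \<ge> 0"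
    and x: "\<forall>j<Suc N. x j \<in> K"
  shows "VV (Suc N) x \<le> real (Suc N) * A * W"
proof (cases "inj_on x {..N}")
  case False
  then obtain a b where ab: "a \<le> N" "b \<le> N" "a \<noteq> b" "x a = x b" by (auto simp: inj_on_def)
  have "QS {..<Suc N} x = 0" by (rule QS_zero[of _ a b]) (use ab in auto)
  hence "VV (Suc N) x = 0" by (simp add: QS_VV)
  thus ?thesis using A0 W0 by simp
next
  case inj: True
  define D where "D i = (\<Prod>j\<in>{..N}-{i}. (x i - x j))" for i
  have QSpos: "QS {..N} x > 0" by (rule QS_pos) (use inj in auto)
  have VVeq: "(VV (Suc N) x)^2 = QS {..N} x" using QS_VV[of "Suc N" x] by (simp add: lessThan_Suc_atMost)
  have "VV (Suc N) x \<noteq> 0" using VVeq QSpos by auto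
  hence Vpos: "VV (Suc N) x > 0" using VV_nonneg[of "Suc N" x] by linarith
  have keyi: "1 / cmod (D i) \<le> W / VV (Suc N) x" if i: "i \<le> N" for i
  proof -
    have "QS {..N} x = (\<Prod>b\<in>{..N}-{i}. cmod (x i - x b))^2 * QS ({..N}-{i}) x"
      by (rule QS_remove) (use i in auto)
    also have "(\<Prod>b\<in>{..N}-{i}. cmod (x i - x b)) = cmod (D i)"
      unfolding D_def by (simp add: prod_norm)
    finally have eq: "QS {..N} x = cmod (D i)^2 * QS ({..N}-{i}) x" .
    have "QS ({..N}-{i}) x \<le> W^2"
      by (rule QS_bound[OF W]) (use i x in auto)
    hence "cmod (D i)^2 * QS ({..N}-{i}) x \<le> cmod (D i)^2 * W^2"
      by (rule mult_left_mono) simp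
    hence "(VV (Suc N) x)^2 \<le> (cmod (D i) * W)^2"
      unfolding VVeq eq power_mult_distrib .
    hence "VV (Suc N) x \<le> cmod (D i) * W"
      by (rule power2_le_imp_le) (use W0 in simp)
    moreover have "cmod (D i) > 0" using inj i unfolding D_def by (auto simp: inj_on_def)
    ultimately show ?thesis using Vpos by (simp add: field_simps)
  qed
  have "1 = cmod (\<Sum>i\<le>N. poly P (x i) / D i)"
    using lagrange_lead[OF inj P] unfolding D_def by simp
  also have "\<dots> \<le> (\<Sum>i\<le>N. cmod (poly P (x i)) / cmod (D i))"
    by (rule order.trans[OF norm_sum]) (simp add: norm_divide)
  also have "\<dots> \<le> (\<Sum>i\<le>N. A * (W / VV (Suc N) x))"
  proof (intro sum_mono)
    fix i assume i: "i \<in> {..N}"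
    have "cmod (poly P (x i)) / cmod (D i) = cmod (poly P (x i)) * (1 / cmod (D i))" by simp
    also have "\<dots> \<le> A * (W / VV (Suc N) x)"
      using PA x i keyi[of i] A0 by (intro mult_mono) auto
    finally show "cmod (poly P (x i)) / cmod (D i) \<le> A * (W / VV (Suc N) x)" .
  qed
  also have "\<dots> = real (Suc N) * A * W / VV (Suc N) x" by simp
  finally show ?thesis using Vpos by (simp add: field_simps)
qed



lemma lim_aux1: "(\<lambda>M::nat. real M powr (2/(real M - 1))) \<longlonglongrightarrow> 1" by real_asymp

lemma lim_aux2: assumes "G > 0" shows "(\<lambda>M::nat. G powr (2/real M)) \<longlonglongrightarrow> 1"
proof -
  have "(\<lambda>M::nat. exp (ln G * (2/real M))) \<longlonglongrightarrow> exp (ln G * 0)"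
    by (intro tendsto_intros)
  thus ?thesis using assms by (simp add: powr_def mult.commute)
qed

lemma lim_h: assumes "G > 0"
  shows "(\<lambda>M::nat. real M powr (2/(real M - 1)) * G powr (2/real M) * C) \<longlonglongrightarrow> C"
  using tendsto_mult[OF tendsto_mult[OF lim_aux1 lim_aux2[OF assms]] tendsto_const[of C]] by simp

lemma B_main:
  fixes w :: "complex poly"
  assumes K: "bounded K" "K \<noteq> {}" and w: "lead_coeff w = 1" "degree w = L" "L \<ge> 1"
    and A: "A > 0" "\<forall>z\<in>K. cmod (poly w z) \<le> A"
  obtains G where "G \<ge> 1" "\<And>M. M \<ge> 2 \<Longrightarrow>
     nth_diameter M K \<le> real M powr (2/(real M - 1)) * G powr (2 / real M) * A powr (1/real L)"
proof -
  obtain c where c: "c \<in> K" using K by auto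
  obtain B0 where B0: "\<forall>x\<in>K. norm x \<le> B0" using K bounded_iff by auto
  define B where "B = max 1 (2*B0)"
  have B1: "B \<ge> 1" unfolding B_def by simp
  have Bz: "cmod (z - c) \<le> B" if "z \<in> K" for z
  proof -
    have "cmod (z - c) \<le> cmod z + cmod c" by (rule norm_triangle_ineq4)
    moreover have "cmod z \<le> B0" "cmod c \<le> B0" using B0 that c by auto
    ultimately show ?thesis unfolding B_def by (intro max.coboundedI2) linarith
  qed
  define a where "a = A powr (1/real L)"
  have apos: "a > 0" unfolding a_def using A by simp
  have aL: "a ^ L = A" unfolding a_def using A w(3)
    by (simp add: powr_realpow[symmetric] powr_powr)
  define mB where "mB = max 1 (B/a)"
  define G where "G = mB ^ L"
  have mB1: "mB \<ge> 1" unfolding mB_def by simp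
  have G1: "G \<ge> 1" unfolding G_def using mB1 by simp
  define P where "P N = w ^ (N div L) * [:-c,1:] ^ (N mod L)" for N
  have w0: "w \<noteq> 0" using w by auto
  have Plc: "lead_coeff (P N) = 1" for N
  proof -
    have "lead_coeff w = 1" by (rule w(1))
    thus ?thesis unfolding P_def by (simp only: lead_coeff_mult lead_coeff_power) simp
  qed
  have Pdeg: "degree (P N) = N" for N
  proof -
    have "degree (P N) = (N div L) * L + N mod L"
      unfolding P_def using w0 w by (simp add: degree_mult_eq degree_power_eq)
    also have "\<dots> = N" by simp
    finally show ?thesis .
  qed
  have Pbound: "\<forall>z\<in>K. cmod (poly (P N) z) \<le> G * a ^ N" for N
  proof
    fix z assume z: "z \<in> K"
    define s where "s = N div L"
    define r where "r = N mod L"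
    have rL: "r \<le> L" unfolding r_def using w(3) by (simp add: order.strict_implies_order)
    have N: "N = L * s + r" unfolding s_def r_def by simp
    have "cmod (poly (P N) z) = cmod (poly w z) ^ s * cmod (z - c) ^ r"
      unfolding P_def s_def r_def by (simp add: norm_mult norm_power)
    also have "\<dots> \<le> A ^ s * B ^ r"
      using A z Bz[OF z] by (intro mult_mono power_mono) auto
    also have "A ^ s = a ^ (L * s)" by (simp add: aL power_mult)
    also have "B ^ r \<le> (mB * a) ^ r"
    proof (rule power_mono)
      have "B / a \<le> mB" unfolding mB_def by simp
      thus "B \<le> mB * a" using apos by (simp add: field_simps)
    qed (use B1 in simp)
    also have "(mB * a) ^ r = mB ^ r * a ^ r" by (simp add: power_mult_distrib)
    also have "mB ^ r \<le> G" unfolding G_def by (rule power_increasing[OF rL mB1])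
    hence "a ^ (L * s) * (mB ^ r * a ^ r) \<le> a ^ (L * s) * (G * a ^ r)"
      using apos by (intro mult_left_mono mult_right_mono) auto
    also have "a ^ (L * s) * (G * a ^ r) = G * a ^ N"
      unfolding N by (simp add: power_add mult_ac)
    finally show "cmod (poly (P N) z) \<le> G * a ^ N"
      using apos by (simp add: mult_left_mono)
  qed
  have claim: "\<forall>y. (\<forall>j<M. y j \<in> K) \<longrightarrow>
      VV M y \<le> fact M * G ^ (M - 1) * a powr (real M * (real M - 1) / 2)" if M: "M \<ge> 1" for M
    using M
  proof (induction M rule: nat_induct_at_least)
    case base
    show ?case using apos by (simp add: VV_def)
  next
    case (Suc M)
    show ?case
    proof (intro allI impI)
      fix y assume y: "\<forall>j<Suc M. y j \<in> K"
      have IH: "\<And>y. (\<forall>j<M. y j \<in> K) \<Longrightarrow>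
          VV M y \<le> fact M * G ^ (M - 1) * a powr (real M * (real M - 1) / 2)"
        using Suc.IH by blast
      have "VV (Suc M) y \<le> real (Suc M) * (G * a ^ M) *
          (fact M * G ^ (M - 1) * a powr (real M * (real M - 1) / 2))"
        by (rule B_rec[OF Plc Pdeg Pbound IH _ _ y]) (use G1 apos in auto)
      also have "\<dots> = fact (Suc M) * (G * G ^ (M - 1)) * (a ^ M * a powr (real M * (real M - 1) / 2))"
        by (simp add: algebra_simps)
      also have "G * G ^ (M - 1) = G ^ (Suc M - 1)"
        using Suc.hyps by (cases M) auto
      also have "a ^ M * a powr (real M * (real M - 1) / 2) = a powr (real (Suc M) * (real (Suc M) - 1) / 2)"
      proof -
        have "a ^ M * a powr (real M * (real M - 1) / 2) = a powr (real M + real M * (real M - 1) / 2)"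
          using apos by (simp add: powr_add powr_realpow)
        also have "real M + real M * (real M - 1) / 2 = real (Suc M) * (real (Suc M) - 1) / 2"
          by (simp add: field_simps)
        finally show ?thesis .
      qed
      finally show "VV (Suc M) y \<le> fact (Suc M) * G ^ (Suc M - 1) *
          a powr (real (Suc M) * (real (Suc M) - 1) / 2)" .
    qed
  qed
  have final: "nth_diameter M K \<le> real M powr (2/(real M - 1)) * G powr (2 / real M) * a"
    if M: "M \<ge> 2" for M
  proof -
    define e where "e = 2 / (real M * (real M - 1))"
    have e0: "e > 0" unfolding e_def using M by auto
    have "nth_diameter M K = Sup {VV M z powr e | z. \<forall>i<M. z i \<in> K}"
      unfolding e_def by (rule nd_eq)
    also have "\<dots> \<le> real M powr (2/(real M - 1)) * G powr (2 / real M) * a"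
    proof (rule cSup_least)
      show "{VV M z powr e | z. \<forall>i<M. z i \<in> K} \<noteq> {}"
        using nd_facts(2)[OF K M] unfolding e_def .
    next
      fix t assume "t \<in> {VV M z powr e | z. \<forall>i<M. z i \<in> K}"
      then obtain z where z: "\<forall>i<M. z i \<in> K" and t: "t = VV M z powr e" by auto
      have "t \<le> (fact M * G ^ (M - 1) * a powr (real M * (real M - 1) / 2)) powr e"
        unfolding t using claim[of M] M z e0 by (intro powr_mono2) (auto intro: VV_nonneg)
      also have "\<dots> = fact M powr e * (G ^ (M - 1)) powr e * (a powr (real M * (real M - 1) / 2)) powr e"
        using G1 apos by (simp add: powr_mult)
      also have "(a powr (real M * (real M - 1) / 2)) powr e = a"
        using apos M unfolding e_def by (simp add: powr_powr)
      also have "(G ^ (M - 1)) powr e = G powr (2 / real M)"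
      proof -
        have "(G ^ (M - 1)) powr e = G powr (real (M - 1) * e)"
          using G1 by (simp add: powr_realpow[symmetric] powr_powr)
        also have "real (M - 1) * e = 2 / real M"
          using M unfolding e_def by (simp add: of_nat_diff field_simps)
        finally show ?thesis .
      qed
      also have "fact M powr e \<le> real M powr (2/(real M - 1))"
      proof -
        have "fact M powr e \<le> (real M ^ M) powr e"
          using fact_le_power[of M] e0 by (intro powr_mono2) auto
        also have "(real M ^ M) powr e = real M powr (real M * e)"
          using M by (simp add: powr_realpow[symmetric] powr_powr)
        also have "real M * e = 2/(real M - 1)"
          using M unfolding e_def by (simp add: field_simps)
        finally show ?thesis .
      qed
      hence "fact M powr e * G powr (2 / real M) * a \<le> real M powr (2/(real M - 1)) * G powr (2 / real M) * a"
        using apos by (intro mult_right_mono) auto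
      finally show "t \<le> real M powr (2/(real M - 1)) * G powr (2 / real M) * a" .
    qed
    finally show ?thesis .
  qed
  show ?thesis using that[OF G1] final unfolding a_def by blast
qed



lemma cheb_lower:
  fixes w :: "complex poly"
  assumes K: "bounded K" "K \<noteq> {}" and lim: "(\<lambda>M. nth_diameter M K) \<longlonglongrightarrow> t"
    and w: "lead_coeff w = 1" "degree w = L" "L \<ge> 1" and A: "\<forall>z\<in>K. cmod (poly w z) \<le> A"
  shows "t \<ge> 0" "t ^ L \<le> A"
proof -
  show t0: "t \<ge> 0"
    by (rule LIMSEQ_le_const[OF lim]) (use nd_nonneg[OF K] in auto)
  obtain c where "c \<in> K" using K by auto
  hence A0: "A \<ge> 0" using A by (meson norm_ge_zero order.trans)
  show "t ^ L \<le> A"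
  proof (rule field_le_epsilon)
    fix \<delta> :: real assume \<delta>: "\<delta> > 0"
    have Ap: "A + \<delta> > 0" using A0 \<delta> by simp
    have A': "\<forall>z\<in>K. cmod (poly w z) \<le> A + \<delta>" using A \<delta> by (auto intro: order.trans)
    obtain G where G: "G \<ge> 1" "\<And>M. M \<ge> 2 \<Longrightarrow>
        nth_diameter M K \<le> real M powr (2/(real M - 1)) * G powr (2 / real M) * (A + \<delta>) powr (1/real L)"
      using B_main[OF K w Ap A'] by blast
    have "t \<le> (A + \<delta>) powr (1/real L)"
      by (rule LIMSEQ_le[OF lim lim_h]) (use G in auto)
    hence "t ^ L \<le> ((A + \<delta>) powr (1/real L)) ^ L" using t0 by (intro power_mono) auto
    also have "\<dots> = A + \<delta>" using Ap w(3) by (simp add: powr_realpow[symmetric] powr_powr)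
    finally show "t ^ L \<le> A + \<delta>" .
  qed
qed

lemma fekete_poly:
  assumes K: "bounded K" "infinite K" and L: "L \<ge> 1" and th: "\<theta> > 1"
  obtains a :: "nat \<Rightarrow> complex" and J :: "nat set" where "finite J" "card J = L" "a ` J \<subseteq> K"
    "\<forall>z\<in>K. cmod (poly (\<Prod>j\<in>J. [:-a j, 1:]) z) \<le> \<theta> * nth_diameter (Suc L) K ^ L"
proof -
  define N where "N = Suc L"
  have N2: "N \<ge> 2" using L N_def by simp
  have K0: "K \<noteq> {}" using K by auto
  define d where "d = nth_diameter N K"
  have dpos: "d > 0" unfolding d_def by (rule nd_pos[OF K N2])
  define e where "e = 2 / (real N * (real N - 1))"
  have e0: "e > 0" using N2 unfolding e_def by auto
  define S where "S = d powr (real N * (real N - 1) / 2)"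
  have Spos: "S > 0" using dpos unfolding S_def by simp
  have Se: "S powr e = d" unfolding S_def e_def using dpos N2 by (simp add: powr_powr)
  have "(S/\<theta>) powr e < d"
  proof -
    have "(S/\<theta>) powr e = S powr e / \<theta> powr e" using Spos th by (simp add: powr_divide)
    also have "\<dots> < S powr e"
      using gr_one_powr[OF th e0] Spos by (simp add: divide_less_eq)
    finally show ?thesis using Se by simp
  qed
  then obtain x where x: "\<forall>i<N. x i \<in> K" and xv: "(S/\<theta>) powr e < VV N x powr e"
    using nd_approx[OF K(1) K0 N2] unfolding d_def e_def by blast
  define V where "V = VV N x"
  have SV: "S/\<theta> < V"
  proof (rule ccontr)
    assume "\<not> S/\<theta> < V"
    hence "V powr e \<le> (S/\<theta>) powr e" using e0 unfolding V_def by (intro powr_mono2) (auto intro: VV_nonneg)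
    thus False using xv unfolding V_def by simp
  qed
  have "S / \<theta> > 0" using Spos th by simp
  hence Vpos: "V > 0" using SV by linarith
  have VS: "V \<le> S" using nd_upper[OF K(1) N2 x] unfolding V_def S_def d_def .
  define I where "I = {..<N}"
  define D where "D i = (\<Prod>b\<in>I-{i}. (x i - x b))" for i
  have QSI: "QS I x = V^2" unfolding I_def V_def by (rule QS_VV)
  have QSD: "QS I x = (\<Prod>i\<in>I. cmod (D i))" unfolding QS_def D_def by (simp add: prod_norm)
  have "\<exists>i\<in>I. cmod (D i) \<le> V powr (2 / real N)"
  proof (rule ccontr)
    assume "\<not> ?thesis"
    hence lt: "\<forall>i\<in>I. V powr (2 / real N) < cmod (D i)" by auto
    have "(\<Prod>i\<in>I. V powr (2 / real N)) < (\<Prod>i\<in>I. cmod (D i))"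
    proof (rule prod_mono_strict[of 0])
      show "0 \<in> I" using N2 by (simp add: I_def)
      show "finite I" by (simp add: I_def)
      show "V powr (2 / real N) < cmod (D 0)" using lt \<open>0 \<in> I\<close> by blast
      fix j assume j: "j \<in> I"
      have "V powr (2 / real N) < cmod (D j)" using lt j by blast
      moreover have "0 \<le> V powr (2 / real N)" by simp
      ultimately show "0 \<le> V powr (2 / real N) \<and> V powr (2 / real N) \<le> cmod (D j)"
        and "0 < cmod (D j)" by linarith+
    qed
    also have "(\<Prod>i\<in>I. V powr (2 / real N)) = V^2"
    proof -
      have "(\<Prod>i\<in>I. V powr (2 / real N)) = (V powr (2 / real N)) ^ N" by (simp add: I_def)
      also have "\<dots> = V powr (2 / real N * real N)"
        using Vpos by (simp add: powr_realpow[symmetric] powr_powr)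
      also have "\<dots> = V^2" using N2 Vpos by (simp add: powr_realpow)
      finally show ?thesis .
    qed
    finally show False using QSI QSD by simp
  qed
  then obtain i where i: "i \<in> I" "cmod (D i) \<le> V powr (2 / real N)" by blast
  define J where "J = I - {i}"
  have finJ: "finite J" unfolding J_def I_def by simp
  have cardJ: "card J = L" unfolding J_def I_def N_def using i by (simp add: I_def N_def)
  have xJ: "x ` J \<subseteq> K" using x unfolding J_def I_def by auto
  have finI: "finite I" unfolding I_def by simp
  have QSx: "QS I x = cmod (D i)^2 * QS J x"
    unfolding J_def using QS_remove[OF finI i(1), of x] by (simp add: D_def prod_norm)
  have QSJpos: "QS J x > 0"
  proof -
    have "QS I x > 0" using QSI Vpos by simp
    thus ?thesis using QSx QS_nonneg[of J x] by (auto simp: zero_less_mult_iff)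
  qed
  have Dpos: "cmod (D i) > 0"
  proof -
    have "QS I x > 0" using QSI Vpos by simp
    thus ?thesis using QSx by (auto simp: zero_less_mult_iff)
  qed
  have bound: "cmod (poly (\<Prod>j\<in>J. [:-x j, 1:]) z) \<le> \<theta> * d ^ L" if z: "z \<in> K" for z
  proof -
    define y where "y = x(i := z)"
    have yK: "\<forall>j<N. y j \<in> K" using x z unfolding y_def by auto
    have VVy: "VV N y \<le> S" using nd_upper[OF K(1) N2 yK] unfolding S_def d_def .
    define PP where "PP = (\<Prod>b\<in>J. cmod (z - x b))"
    have Pi0: "PP \<ge> 0" unfolding PP_def by (intro prod_nonneg) auto
    have polyeq: "cmod (poly (\<Prod>j\<in>J. [:-x j, 1:]) z) = PP"
      unfolding PP_def by (simp add: linprod_facts(3)[OF finJ] prod_norm)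
    have QSy: "QS I y = PP^2 * QS J x"
    proof -
      have "QS I y = (\<Prod>b\<in>I-{i}. cmod (y i - y b))^2 * QS (I-{i}) y"
        by (rule QS_remove[OF finI i(1)])
      also have "(\<Prod>b\<in>I-{i}. cmod (y i - y b)) = PP"
        unfolding PP_def J_def y_def by (intro prod.cong refl) auto
      also have "QS (I-{i}) y = QS J x"
        unfolding QS_def J_def y_def by (intro prod.cong refl) auto
      finally show ?thesis .
    qed
    have "PP^2 * QS J x \<le> S^2"
    proof -
      have "QS I y = (VV N y)^2" unfolding I_def by (rule QS_VV)
      also have "\<dots> \<le> S^2" using VVy by (intro power_mono) (auto intro: VV_nonneg)
      finally show ?thesis using QSy by simp
    qed
    hence le1: "PP^2 * QS J x * cmod (D i)^2 \<le> S^2 * cmod (D i)^2"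
      by (rule mult_right_mono) simp
    have eqV: "V^2 = cmod (D i)^2 * QS J x" using QSI QSx by simp
    have "(PP * V)^2 = PP^2 * QS J x * cmod (D i)^2"
      unfolding power_mult_distrib eqV by (simp only: mult_ac)
    also note le1
    also have "S^2 * cmod (D i)^2 = (S * cmod (D i))^2" by (simp only: power_mult_distrib)
    finally have "(PP * V)^2 \<le> (S * cmod (D i))^2" .
    hence "PP * V \<le> S * cmod (D i)"
      by (rule power2_le_imp_le) (use Spos in simp)
    hence "PP \<le> S * cmod (D i) / V" using Vpos by (simp add: field_simps)
    also have "\<dots> \<le> \<theta> * cmod (D i)"
    proof -
      have "S < \<theta> * V" using SV th by (simp add: field_simps)
      hence "S * cmod (D i) \<le> \<theta> * V * cmod (D i)" using Dpos by (intro mult_right_mono) auto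
      thus ?thesis using Vpos by (simp add: divide_le_eq mult_ac)
    qed
    also have "\<dots> \<le> \<theta> * V powr (2 / real N)"
      using i th by (intro mult_left_mono) auto
    also have "\<dots> \<le> \<theta> * S powr (2 / real N)"
      using VS Vpos th by (intro mult_left_mono powr_mono2) auto
    also have "S powr (2 / real N) = d ^ L"
    proof -
      have "S powr (2 / real N) = d powr (real N * (real N - 1) / 2 * (2 / real N))"
        unfolding S_def using dpos by (simp add: powr_powr)
      also have "real N * (real N - 1) / 2 * (2 / real N) = real L"
        using N2 unfolding N_def by (simp add: field_simps)
      finally show ?thesis using dpos by (simp add: powr_realpow)
    qed
    finally show ?thesis using polyeq by simp
  qed
  show ?thesis
    by (rule that[OF finJ cardJ xJ]) (use bound in \<open>auto simp: d_def N_def\<close>)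
qed

lemma td_conv:
  assumes KK: "compact K" "infinite K"
  shows "(\<lambda>M. nth_diameter M K) \<longlonglongrightarrow> transfinite_diameter K"
proof -
  have K: "bounded K" "K \<noteq> {}" using KK compact_imp_bounded by auto
  define X where "X = {nth_diameter N K | N. N \<ge> 2}"
  define c where "c = Inf X"
  have Xne: "X \<noteq> {}" unfolding X_def by auto
  have bdd: "bdd_below X" unfolding X_def bdd_below_def using nd_nonneg[OF K] by auto
  have cle: "c \<le> nth_diameter N K" if "N \<ge> 2" for N
    unfolding c_def by (rule cInf_lower) (use that bdd in \<open>auto simp: X_def\<close>)
  have conv: "(\<lambda>M. nth_diameter M K) \<longlonglongrightarrow> c"
  proof (rule LIMSEQ_I)
    fix r :: real assume r: "r > 0"
    define \<epsilon> where "\<epsilon> = r / 3"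
    have \<epsilon>: "\<epsilon> > 0" using r unfolding \<epsilon>_def by simp
    have "Inf X < c + \<epsilon>" using \<epsilon> unfolding c_def by simp
    then obtain N where N: "N \<ge> 2" "nth_diameter N K < c + \<epsilon>"
      using cInf_less_iff[OF Xne bdd] unfolding X_def by auto
    define L where "L = N - 1"
    have L1: "L \<ge> 1" and NL: "N = Suc L" using N unfolding L_def by auto
    define d where "d = nth_diameter N K"
    have dpos: "d > 0" unfolding d_def by (rule nd_pos[OF K(1) KK(2) N(1)])
    define \<eta> where "\<eta> = \<epsilon> / (d + 1)"
    have \<eta>: "\<eta> > 0" unfolding \<eta>_def using \<epsilon> dpos by simp
    define \<theta> where "\<theta> = (1 + \<eta>) ^ L"
    have th: "\<theta> > 1" unfolding \<theta>_def by (rule one_less_power) (use \<eta> L1 in auto)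
    obtain a :: "nat \<Rightarrow> complex" and J where J: "finite J" "card J = L" "a ` J \<subseteq> K"
      "\<forall>z\<in>K. cmod (poly (\<Prod>j\<in>J. [:-a j, 1:]) z) \<le> \<theta> * nth_diameter (Suc L) K ^ L"
      by (rule fekete_poly[OF K(1) KK(2) L1 th])
    define A where "A = \<theta> * d ^ L"
    have Apos: "A > 0" unfolding A_def using th dpos by simp
    have wlc: "lead_coeff (\<Prod>j\<in>J. [:-a j, 1:]) = 1" and wdeg: "degree (\<Prod>j\<in>J. [:-a j, 1:]) = L"
      using linprod_facts(1,2)[OF J(1), of a] J(2) by simp_all
    have wA: "\<forall>z\<in>K. cmod (poly (\<Prod>j\<in>J. [:-a j, 1:]) z) \<le> A"
      using J(4) unfolding A_def d_def NL .
    obtain G where G: "G \<ge> 1" "\<And>M. M \<ge> 2 \<Longrightarrow>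
        nth_diameter M K \<le> real M powr (2/(real M - 1)) * G powr (2 / real M) * A powr (1/real L)"
      using B_main[OF K wlc wdeg L1 Apos wA] by blast
    have AL: "A powr (1/real L) = (1 + \<eta>) * d"
    proof -
      have "A powr (1/real L) = \<theta> powr (1/real L) * (d ^ L) powr (1/real L)"
        unfolding A_def using th dpos by (simp add: powr_mult)
      also have "\<theta> powr (1/real L) = 1 + \<eta>"
        unfolding \<theta>_def using \<eta> L1 by (simp add: powr_realpow[symmetric] powr_powr)
      also have "(d ^ L) powr (1/real L) = d"
        using dpos L1 by (simp add: powr_realpow[symmetric] powr_powr)
      finally show ?thesis .
    qed
    have "(1 + \<eta>) * d \<le> d + \<epsilon>"
    proof -
      have "\<eta> * d \<le> \<epsilon>" unfolding \<eta>_def using \<epsilon> dpos by (simp add: field_simps)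
      thus ?thesis by (simp add: algebra_simps)
    qed
    have "eventually (\<lambda>M. real M powr (2/(real M - 1)) * G powr (2 / real M) * A powr (1/real L)
        < A powr (1/real L) + \<epsilon>) sequentially"
      by (rule order_tendstoD(2)[OF lim_h]) (use G \<epsilon> in auto)
    then obtain M0 where M0: "\<And>M. M \<ge> M0 \<Longrightarrow> real M powr (2/(real M - 1)) * G powr (2 / real M) * A powr (1/real L)
        < A powr (1/real L) + \<epsilon>" by (auto simp: eventually_sequentially)
    show "\<exists>no. \<forall>n\<ge>no. norm (nth_diameter n K - c) < r"
    proof (intro exI allI impI)
      fix M assume M: "M \<ge> max 2 M0"
      have "nth_diameter M K < A powr (1/real L) + \<epsilon>"
        using G(2)[of M] M0[of M] M by auto
      also have "\<dots> \<le> d + 2 * \<epsilon>" using AL \<open>(1 + \<eta>) * d \<le> d + \<epsilon>\<close> by simp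
      finally have up: "nth_diameter M K < c + r" using N(2) unfolding d_def \<epsilon>_def by simp
      have lo: "c \<le> nth_diameter M K" using cle M by simp
      show "norm (nth_diameter M K - c) < r" using up lo by simp
    qed
  qed
  have "transfinite_diameter K = c"
    unfolding transfinite_diameter_def using KK(2) conv by (simp add: limI)
  thus ?thesis using conv by simp
qed



lemma pw_facts:
  fixes p q :: "complex poly"
  assumes "lead_coeff p = 1" "degree p = n" "degree q = k" "k < n"
  shows "degree (p - smult w q) = n" "lead_coeff (p - smult w q) = 1" "p - smult w q \<noteq> 0"
proof -
  have cp: "coeff p n = 1" using assms by simp
  have cq: "coeff q n = 0" using assms by (intro coeff_eq_0) simp
  have c: "coeff (p - smult w q) n = 1" using cp cq by simp
  have le: "degree (p - smult w q) \<le> n"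
    by (rule degree_diff_le) (use assms in \<open>auto intro: order.trans[OF degree_smult_le]\<close>)
  have ge: "n \<le> degree (p - smult w q)" by (rule le_degree) (use c in simp)
  show d: "degree (p - smult w q) = n" using le ge by simp
  show "lead_coeff (p - smult w q) = 1" using d c by simp
  show "p - smult w q \<noteq> 0" using c by auto
qed

lemma pw_roots:
  fixes p q :: "complex poly"
  assumes "lead_coeff p = 1" "degree p = n" "degree q = k" "k < n"
  obtains r where "p - smult w q = (\<Prod>i<n. [:-r i, 1:])"
proof -
  obtain r where r: "smult (lead_coeff (p - smult w q)) (\<Prod>i<degree (p - smult w q). [:-r i, 1:]) = p - smult w q"
    using complex_poly_decompose' by blast
  thus ?thesis using that[of r] pw_facts[OF assms, of w] by simp
qed

lemma root_in:
  fixes p q :: "complex poly"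
  assumes cop: "coprime p q" and z: "poly p z = w * poly q z"
  shows "poly q z \<noteq> 0"
proof
  assume q0: "poly q z = 0"
  hence p0: "poly p z = 0" using z by simp
  have "[:-z, 1:] dvd p" "[:-z, 1:] dvd q" using p0 q0 by (simp_all add: poly_eq_0_iff_dvd)
  hence "is_unit [:-z, 1:]" using cop coprime_common_divisor by blast
  hence "degree [:-z, 1:] = 0" by (subst (asm) is_unit_iff_degree) auto
  thus False by simp
qed

lemma pow_root: assumes "(x::real) \<ge> 0" "n \<ge> 1" shows "(x ^ n) powr (1 / real n) = x"
proof (cases "x = 0")
  case True thus ?thesis using assms by simp
next
  case False
  hence "x > 0" using assms by simp
  thus ?thesis using assms by (simp add: powr_realpow[symmetric] powr_powr)
qed

lemma lim_aux3: assumes "C > 0" shows "(\<lambda>L::nat. C powr (c / real L)) \<longlonglongrightarrow> 1"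
proof -
  have "(\<lambda>L::nat. c / real L) \<longlonglongrightarrow> 0" by real_asymp
  hence "(\<lambda>L::nat. exp (ln C * (c / real L))) \<longlonglongrightarrow> exp (ln C * 0)"
    by (intro tendsto_intros)
  thus ?thesis using assms by (simp add: powr_def mult.commute)
qed



theorem mainTheorem20:
  fixes p q :: "complex poly" and n k :: nat and F :: "complex set"
  assumes "lead_coeff p = 1" "degree p = n"
    and "q \<noteq> 0" "degree q = k" "k < n"
    and "coprime p q"
    and "compact F"
    and "compact {z. poly q z \<noteq> 0 \<and> poly p z / poly q z \<in> F}"
    and "{z. poly q z \<noteq> 0 \<and> poly p z / poly q z \<in> F} \<noteq> {}"
  shows "((INF z\<in>{z. poly q z \<noteq> 0 \<and> poly p z / poly q z \<in> F}. cmod (poly q z))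
            * transfinite_diameter F) powr (1 / real n)
           \<le> transfinite_diameter {z. poly q z \<noteq> 0 \<and> poly p z / poly q z \<in> F}
       \<and> transfinite_diameter {z. poly q z \<noteq> 0 \<and> poly p z / poly q z \<in> F}
           \<le> ((SUP z\<in>{z. poly q z \<noteq> 0 \<and> poly p z / poly q z \<in> F}. cmod (poly q z))
            * transfinite_diameter F) powr (1 / real n)"
proof -
  note pq = assms(1,2,4,5)
  define S where "S = {z. poly q z \<noteq> 0 \<and> poly p z / poly q z \<in> F}"
  define m where "m = (INF z\<in>S. cmod (poly q z))"
  define M where "M = (SUP z\<in>S. cmod (poly q z))"
  have n1: "n \<ge> 1" using assms(5) by simp
  have Sc: "compact S" and Sne: "S \<noteq> {}" using assms(8,9) unfolding S_def by auto
  have Sb: "bounded S" using Sc compact_imp_bounded by auto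
  have Fb: "bounded F" using assms(7) compact_imp_bounded by auto
  have bddb: "bdd_below ((\<lambda>z. cmod (poly q z)) ` S)"
    unfolding bdd_below_def by (intro exI[of _ 0]) auto
  have "compact ((\<lambda>z. cmod (poly q z)) ` S)"
    by (rule compact_continuous_image[OF _ Sc]) (intro continuous_intros)
  hence bdda: "bdd_above ((\<lambda>z. cmod (poly q z)) ` S)"
    by (intro bounded_imp_bdd_above compact_imp_bounded)
  have mle: "m \<le> cmod (poly q z)" if "z \<in> S" for z
    unfolding m_def by (rule cINF_lower[OF bddb that])
  have Mge: "cmod (poly q z) \<le> M" if "z \<in> S" for z
    unfolding M_def by (rule cSUP_upper[OF that bdda])
  have m0: "m \<ge> 0" unfolding m_def by (rule cINF_greatest[OF Sne]) simp
  have M0: "M \<ge> 0" using Sne Mge by (meson ex_in_conv norm_ge_zero order.trans)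
  have rootsS: "z \<in> S \<and> poly p z / poly q z = w" if "w \<in> F" "poly p z = w * poly q z" for w z
  proof -
    have "poly q z \<noteq> 0" by (rule root_in[OF assms(6) that(2)])
    thus ?thesis using that unfolding S_def by auto
  qed
  have polypw: "poly (p - smult w q) z = poly p z - w * poly q z" for w z by simp
  show ?thesis
  proof (cases "finite F")
    case True
    have "S \<subseteq> (\<Union>w\<in>F. {z. poly (p - smult w q) z = 0})"
    proof
      fix z assume z: "z \<in> S"
      hence "poly p z / poly q z \<in> F" "poly q z \<noteq> 0" unfolding S_def by auto
      thus "z \<in> (\<Union>w\<in>F. {z. poly (p - smult w q) z = 0})"
        by (intro UN_I[of "poly p z / poly q z"]) auto
    qed
    moreover have "finite (\<Union>w\<in>F. {z. poly (p - smult w q) z = 0})"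
      using True by (intro finite_UN_I poly_roots_finite pw_facts(3)[OF pq])
    ultimately have "finite S" by (rule finite_subset)
    hence "transfinite_diameter S = 0" "transfinite_diameter F = 0"
      using True unfolding transfinite_diameter_def by auto
    thus ?thesis unfolding S_def[symmetric] by simp
  next
    case Finf: False
    have Fne: "F \<noteq> {}" using Finf by auto
    have "F \<subseteq> (\<lambda>z. poly p z / poly q z) ` S"
    proof
      fix w assume w: "w \<in> F"
      obtain r where r: "p - smult w q = (\<Prod>i<n. [:-r i, 1:])" using pw_roots[OF pq] by blast
      have "poly (p - smult w q) (r 0) = 0" unfolding r using n1
        by (simp add: poly_prod) (intro prod_zero bexI[of _ 0], auto)
      hence "poly p (r 0) = w * poly q (r 0)" by simp
      from rootsS[OF w this] show "w \<in> (\<lambda>z. poly p z / poly q z) ` S" by force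
    qed
    hence Sinf: "infinite S" using Finf finite_surj by blast
    have limF: "(\<lambda>M. nth_diameter M F) \<longlonglongrightarrow> transfinite_diameter F"
      by (rule td_conv[OF assms(7) Finf])
    have limS: "(\<lambda>M. nth_diameter M S) \<longlonglongrightarrow> transfinite_diameter S"
      by (rule td_conv[OF Sc Sinf])
    define tF where "tF = transfinite_diameter F"
    define tS where "tS = transfinite_diameter S"
    have tF0: "tF \<ge> 0" unfolding tF_def
      by (rule LIMSEQ_le_const[OF limF]) (use nd_nonneg[OF Fb Fne] in auto)
    have tS0: "tS \<ge> 0" unfolding tS_def
      by (rule LIMSEQ_le_const[OF limS]) (use nd_nonneg[OF Sb Sne] in auto)
    have up_L: "tS ^ n \<le> M * 2 powr (1 / real L) * nth_diameter (Suc L) F" if L: "L \<ge> 1" for L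
    proof -
      define d where "d = nth_diameter (Suc L) F"
      have d0: "d \<ge> 0" unfolding d_def by (rule nd_nonneg[OF Fb Fne]) (use L in simp)
      obtain a :: "nat \<Rightarrow> complex" and J where J: "finite J" "card J = L" "a ` J \<subseteq> F"
        "\<forall>z\<in>F. cmod (poly (\<Prod>j\<in>J. [:-a j, 1:]) z) \<le> 2 * nth_diameter (Suc L) F ^ L"
        by (rule fekete_poly[OF Fb Finf L, of 2]) (use L in auto)
      define P where "P = (\<Prod>j\<in>J. p - smult (a j) q)"
      have Plc: "lead_coeff P = 1" unfolding P_def
        by (subst lead_coeff_prod) (simp only: pw_facts(2)[OF pq] prod.neutral_const)
      have Pdeg: "degree P = L * n" unfolding P_def
        by (subst degree_prod_eq_sum_degree) (use pw_facts(3)[OF pq] in \<open>simp_all add: pw_facts(1)[OF pq] J(2)\<close>)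
      have Pb: "\<forall>z\<in>S. cmod (poly P z) \<le> M ^ L * (2 * d ^ L)"
      proof
        fix z assume z: "z \<in> S"
        hence qz: "poly q z \<noteq> 0" and phi: "poly p z / poly q z \<in> F" unfolding S_def by auto
        define \<phi> where "\<phi> = poly p z / poly q z"
        have pz: "poly p z = poly q z * \<phi>" unfolding \<phi>_def using qz by simp
        have "poly P z = (\<Prod>j\<in>J. poly q z * (\<phi> - a j))"
          unfolding P_def poly_prod by (intro prod.cong refl) (simp add: pz algebra_simps)
        hence "cmod (poly P z) = (\<Prod>j\<in>J. cmod (poly q z) * cmod (\<phi> - a j))"
          by (simp add: prod_norm[symmetric] norm_mult)
        also have "\<dots> = cmod (poly q z) ^ L * cmod (poly (\<Prod>j\<in>J. [:-a j, 1:]) \<phi>)"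
          by (simp add: prod.distrib J(2) linprod_facts(3)[OF J(1)] prod_norm)
        also have "\<dots> \<le> M ^ L * (2 * d ^ L)"
          using J(4) phi Mge[OF z] M0 unfolding d_def \<phi>_def
          by (intro mult_mono power_mono) auto
        finally show "cmod (poly P z) \<le> M ^ L * (2 * d ^ L)" .
      qed
      have "tS ^ (L * n) \<le> M ^ L * (2 * d ^ L)"
        unfolding tS_def by (rule cheb_lower(2)[OF Sb Sne limS Plc Pdeg _ Pb]) (use L n1 in simp)
      hence "(tS ^ n) ^ Suc (L - 1) \<le> (M * 2 powr (1 / real L) * d) ^ Suc (L - 1)"
      proof -
        assume h: "tS ^ (L * n) \<le> M ^ L * (2 * d ^ L)"
        have e1: "Suc (L - 1) = L" using L by simp
        have "(2 powr (1 / real L)) ^ L = 2" using L by (simp add: powr_realpow[symmetric] powr_powr)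
        hence "(M * 2 powr (1 / real L) * d) ^ L = M ^ L * (2 * d ^ L)"
          by (simp add: power_mult_distrib)
        thus ?thesis using h unfolding e1 by (simp add: power_mult[symmetric] mult.commute)
      qed
      hence "tS ^ n \<le> M * 2 powr (1 / real L) * d"
        by (rule power_le_imp_le_base) (use M0 d0 in simp)
      thus ?thesis unfolding d_def .
    qed
    have upper: "tS ^ n \<le> M * tF"
    proof -
      have "(\<lambda>L. M * 2 powr (1 / real L) * nth_diameter (Suc L) F) \<longlonglongrightarrow> M * 1 * tF"
        unfolding tF_def
        by (intro tendsto_mult tendsto_const lim_aux3[of 2 1, simplified] LIMSEQ_Suc[OF limF])
      hence "tS ^ n \<le> M * 1 * tF" by (rule LIMSEQ_le_const) (use up_L in blast)
      thus ?thesis by simp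
    qed
    have lower: "m * tF \<le> tS ^ n"
    proof (cases "m = 0")
      case True thus ?thesis using tS0 by simp
    next
      case False
      hence mpos: "m > 0" using m0 by simp
      have lo_L: "m * tF \<le> 2 powr (real n / real L) * nth_diameter (Suc L) S ^ n" if L: "L \<ge> 1" for L
      proof -
        define d where "d = nth_diameter (Suc L) S"
        have d0: "d \<ge> 0" unfolding d_def by (rule nd_nonneg[OF Sb Sne]) (use L in simp)
        obtain \<zeta> :: "nat \<Rightarrow> complex" and J where J: "finite J" "card J = L" "\<zeta> ` J \<subseteq> S"
          "\<forall>z\<in>S. cmod (poly (\<Prod>j\<in>J. [:-\<zeta> j, 1:]) z) \<le> 2 * nth_diameter (Suc L) S ^ L"
          by (rule fekete_poly[OF Sb Sinf L, of 2]) (use L in auto)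
        define Aw where "Aw = 2 * d ^ L"
        have Aw0: "Aw \<ge> 0" unfolding Aw_def using d0 by simp
        define T where "T = (\<Prod>j\<in>J. [:-(poly p (\<zeta> j) / poly q (\<zeta> j)), 1:])"
        have Tlc: "lead_coeff T = 1" and Tdeg: "degree T = L"
          unfolding T_def using linprod_facts(1,2)[OF J(1)] J(2) by simp_all
        have qzeta: "poly q (\<zeta> j) \<noteq> 0" if "j \<in> J" for j using J(3) that unfolding S_def by auto
        have Tb: "\<forall>w\<in>F. cmod (poly T w) \<le> Aw ^ n / m ^ L"
        proof
          fix w assume w: "w \<in> F"
          obtain r where r: "p - smult w q = (\<Prod>i<n. [:-r i, 1:])" using pw_roots[OF pq] by blast
          have rS: "r i \<in> S" if "i < n" for i
          proof -
            have "poly (p - smult w q) (r i) = 0" unfolding r using that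
              by (simp add: poly_prod) (intro prod_zero bexI[of _ i], auto)
            hence "poly p (r i) = w * poly q (r i)" by simp
            thus ?thesis using rootsS[OF w] by blast
          qed
          have h1: "(\<Prod>i<n. cmod (poly (\<Prod>j\<in>J. [:-\<zeta> j, 1:]) (r i))) \<le> Aw ^ n"
          proof -
            have "(\<Prod>i<n. cmod (poly (\<Prod>j\<in>J. [:-\<zeta> j, 1:]) (r i))) \<le> (\<Prod>i<n. Aw)"
              by (intro prod_mono conjI norm_ge_zero) (use J(4) rS in \<open>auto simp: Aw_def d_def\<close>)
            thus ?thesis by simp
          qed
          have h2: "(\<Prod>i<n. cmod (poly (\<Prod>j\<in>J. [:-\<zeta> j, 1:]) (r i)))
              = (\<Prod>j\<in>J. cmod (poly q (\<zeta> j))) * cmod (poly T w)"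
          proof -
            have "(\<Prod>i<n. cmod (poly (\<Prod>j\<in>J. [:-\<zeta> j, 1:]) (r i))) = (\<Prod>i<n. \<Prod>j\<in>J. cmod (r i - \<zeta> j))"
              by (simp add: linprod_facts(3)[OF J(1)] prod_norm)
            also have "\<dots> = (\<Prod>j\<in>J. \<Prod>i<n. cmod (r i - \<zeta> j))" by (rule prod.swap)
            also have "\<dots> = (\<Prod>j\<in>J. cmod (poly q (\<zeta> j)) * cmod (w - poly p (\<zeta> j) / poly q (\<zeta> j)))"
            proof (rule prod.cong[OF refl])
              fix j assume j: "j \<in> J"
              have "(\<Prod>i<n. cmod (r i - \<zeta> j)) = cmod (poly (p - smult w q) (\<zeta> j))"
                unfolding r by (simp add: poly_prod prod_norm[symmetric] norm_minus_commute)
              also have "poly (p - smult w q) (\<zeta> j) = poly q (\<zeta> j) * (poly p (\<zeta> j) / poly q (\<zeta> j) - w)"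
                using qzeta[OF j] by (simp add: field_simps)
              finally show "(\<Prod>i<n. cmod (r i - \<zeta> j)) = cmod (poly q (\<zeta> j)) * cmod (w - poly p (\<zeta> j) / poly q (\<zeta> j))"
                by (simp add: norm_mult norm_minus_commute)
            qed
            also have "\<dots> = (\<Prod>j\<in>J. cmod (poly q (\<zeta> j))) * cmod (poly T w)"
              unfolding T_def by (simp add: prod.distrib linprod_facts(3)[OF J(1)] prod_norm)
            finally show ?thesis .
          qed
          have h3: "m ^ L \<le> (\<Prod>j\<in>J. cmod (poly q (\<zeta> j)))"
          proof -
            have "(\<Prod>j\<in>J. m) \<le> (\<Prod>j\<in>J. cmod (poly q (\<zeta> j)))"
              by (intro prod_mono conjI) (use m0 mle J(3) in auto)
            thus ?thesis using J(2) by simp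
          qed
          have "m ^ L * cmod (poly T w) \<le> Aw ^ n"
          proof -
            have "m ^ L * cmod (poly T w) \<le> (\<Prod>j\<in>J. cmod (poly q (\<zeta> j))) * cmod (poly T w)"
              by (rule mult_right_mono[OF h3 norm_ge_zero])
            also have "\<dots> \<le> Aw ^ n" using h1 h2 by simp
            finally show ?thesis .
          qed
          thus "cmod (poly T w) \<le> Aw ^ n / m ^ L" using mpos by (simp add: field_simps)
        qed
        have "tF ^ L \<le> Aw ^ n / m ^ L"
          unfolding tF_def by (rule cheb_lower(2)[OF Fb Fne limF Tlc Tdeg L Tb])
        hence "(m * tF) ^ L \<le> Aw ^ n" using mpos by (simp add: power_mult_distrib field_simps)
        also have "Aw ^ n = (2 powr (real n / real L) * d ^ n) ^ L"
        proof -
          have "(2 powr (real n / real L)) ^ L = 2 ^ n"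
            using L by (simp add: powr_realpow[symmetric] powr_powr)
          thus ?thesis unfolding Aw_def by (simp add: power_mult_distrib power_mult[symmetric] mult.commute)
        qed
        finally have "(m * tF) ^ Suc (L - 1) \<le> (2 powr (real n / real L) * d ^ n) ^ Suc (L - 1)"
          using L by simp
        hence "m * tF \<le> 2 powr (real n / real L) * d ^ n"
          by (rule power_le_imp_le_base) (use d0 in simp)
        thus ?thesis unfolding d_def .
      qed
      have "(\<lambda>L. 2 powr (real n / real L) * nth_diameter (Suc L) S ^ n) \<longlonglongrightarrow> 1 * tS ^ n"
        unfolding tS_def by (intro tendsto_mult tendsto_power lim_aux3 LIMSEQ_Suc[OF limS]) simp
      hence "m * tF \<le> 1 * tS ^ n" by (rule LIMSEQ_le_const) (use lo_L in blast)
      thus ?thesis by simp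
    qed
    have "(m * tF) powr (1 / real n) \<le> (tS ^ n) powr (1 / real n)"
      using lower m0 tF0 by (intro powr_mono2) auto
    also have "(tS ^ n) powr (1 / real n) = tS" by (rule pow_root[OF tS0 n1])
    finally have A: "(m * tF) powr (1 / real n) \<le> tS" .
    have "tS = (tS ^ n) powr (1 / real n)" by (rule pow_root[OF tS0 n1, symmetric])
    also have "\<dots> \<le> (M * tF) powr (1 / real n)"
      using upper tS0 by (intro powr_mono2) auto
    finally have B: "tS \<le> (M * tF) powr (1 / real n)" .
    show ?thesis using A B unfolding m_def M_def tS_def tF_def S_def by simp
  qed
qed

end
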